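(* For $d\in[6.74,7.5]$, $|\Psi_d'(x)|<1$ for all $x\in[\frac38,\frac12]$.
   Context: $\Psi_d=\dot\Psi\circ\hat\Psi$ with $\hat\Psi(x)=\frac{1-2x^{2}}{1-x^{2}}$ and $\dot\Psi(v)=\frac{1-v^{d-1}}{2-v^{d-1}}$ ($d$ real). *)

theory Defs
  imports "HOL-Analysis.Analysis"
begin

definition Psi_hat :: "real \<Rightarrow> real" where
  "Psi_hat x = (1 - 2 * x\<^sup>2) / (1 - x\<^sup>2)"

definition Psi_dot :: "real \<Rightarrow> real \<Rightarrow> real" where
  "Psi_dot d v = (1 - v powr (d - 1)) / (2 - v powr (d - 1))"

definition Psi :: "real \<Rightarrow> real \<Rightarrow> real" where
  "Psi d = Psi_dot d \<circ> Psi_hat"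

end

theory Submission
  imports Defs
begin

lemma hat_deriv:
  fixes x :: real assumes "x^2 < 1"
  shows "(Psi_hat has_real_derivative (-2*x/(1-x^2)^2)) (at x)"
proof -
  have ne: "1 - x^2 \<noteq> 0" using assms by simp
  have ne2: "x^2 \<noteq> 1" using assms by simp
  show ?thesis unfolding Psi_hat_def[abs_def]
    apply (rule derivative_eq_intros refl)+
    using ne ne2 by (auto simp: field_simps power2_eq_square)
qed

lemma dot_deriv:
  fixes v d :: real assumes "0 < v" "v powr (d-1) \<noteq> 2"
  shows "(Psi_dot d has_real_derivative (- ((d-1) * v powr (d-1-1)) / (2 - v powr (d-1))^2)) (at v)"
proof -
  have ne: "2 - v powr (d-1) \<noteq> 0" using assms by simp
  show ?thesis unfolding Psi_dot_def[abs_def]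
    apply (rule derivative_eq_intros refl assms)+
    using ne assms by (auto simp: field_simps power2_eq_square)
qed

lemma exp_small: "exp (7/40::real) \<le> 55/46"
proof -
  have "exp (7/320::real) * (1 - 7/320) \<le> exp (7/320) * exp (-7/320)"
    using exp_ge_add_one_self[of "-7/320::real"] by (intro mult_left_mono) auto
  also have "\<dots> = 1" by (simp add: exp_minus)
  finally have "exp (7/320::real) \<le> 320/313" by simp
  hence "exp (7/320::real) ^ 8 \<le> (320/313)^8" by (intro power_mono) auto
  moreover have "exp (7/320::real) ^ 8 = exp (7/40)" by (simp add: exp_of_nat_mult[symmetric])
  moreover have "(320/313::real)^8 \<le> 55/46" by (simp add: power_divide)
  ultimately show ?thesis by linarith
qed

lemma key_mono:
  fixes a q v :: real assumes "0 < q" "q \<le> a" "0 < v" "ln v \<le> -1/q"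
  shows "a * v powr a \<le> q * v powr q"
proof -
  have "a/q \<le> exp (a/q - 1)" using exp_ge_add_one_self[of "a/q-1"] by simp
  also have "\<dots> \<le> exp (-(a-q) * ln v)"
  proof -
    have "(a-q) * (1/q + ln v) \<le> 0" using assms by (intro mult_nonneg_nonpos) auto
    hence "a/q - 1 \<le> -(a-q) * ln v" using assms by (simp add: field_simps)
    thus ?thesis by simp
  qed
  finally have h: "a/q \<le> exp (-(a-q) * ln v)" .
  have va: "v powr a = v powr q * exp ((a-q) * ln v)"
    using assms by (simp add: powr_def exp_add[symmetric] algebra_simps)
  have "a * v powr a = q * v powr q * ((a/q) * exp ((a-q) * ln v))"
    using assms va by (simp add: field_simps)
  also have "\<dots> \<le> q * v powr q * (exp (-(a-q) * ln v) * exp ((a-q) * ln v))"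
    using assms h by (intro mult_left_mono mult_right_mono) auto
  also have "\<dots> = q * v powr q" by (simp add: exp_add[symmetric] algebra_simps)
  finally show ?thesis .
qed


lemma hat_alt: "x^2 < 1 \<Longrightarrow> Psi_hat x = 2 - 1/(1-x^2)"
  unfolding Psi_hat_def by (simp add: field_simps)

lemma hat_mono:
  fixes x y :: real assumes "0 \<le> y" "y \<le> x" "x \<le> 1/2"
  shows "Psi_hat x \<le> Psi_hat y"
proof -
  have "y^2 \<le> x^2" using assms by (intro power_mono) auto
  moreover have "x^2 \<le> 1/4" using assms power_mono[of x "1/2" 2] by (auto simp: power2_eq_square)
  ultimately have "1/(1-y^2) \<le> 1/(1-x^2)" by (intro divide_left_mono) auto
  moreover have "x^2 < 1" "y^2 < 1" using \<open>y^2 \<le> x^2\<close> \<open>x^2 \<le> 1/4\<close> by auto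
  ultimately show ?thesis by (simp add: hat_alt)
qed

lemma hat_bounds:
  fixes x :: real assumes "0 < x" "x \<le> 1/2"
  shows "0 < Psi_hat x" "Psi_hat x < 1"
proof -
  have "x^2 \<le> 1/4" using assms power_mono[of x "1/2" 2] by (auto simp: power2_eq_square)
  moreover have "0 < x^2" using assms by simp
  ultimately show "0 < Psi_hat x" "Psi_hat x < 1" unfolding Psi_hat_def by (auto simp: field_simps)
qed

lemma piece:
  fixes x x1 x2 U :: real
  assumes "0 < x1" "x1 \<le> x" "x \<le> x2" "x2 \<le> 1/2" "Psi_hat x1 ^ 40 \<le> U^7" "0 \<le> U" "U \<le> 1"
    "(40/7) * U/(2-U)^2 * (2*x2/((1-x2^2)*(1-2*x2^2))) < 1"
  shows "(40/7) * (Psi_hat x powr (40/7)) / (2 - Psi_hat x powr (40/7))^2 * (2*x/((1-x^2)*(1-2*x^2))) < 1"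
proof -
  define v where "v = Psi_hat x"
  define s where "s = v powr (40/7)"
  have v0: "0 < v" "v < 1" using hat_bounds[of x] assms unfolding v_def by auto
  have vle: "v \<le> Psi_hat x1" unfolding v_def using hat_mono[of x1 x] assms by auto
  have s0: "0 \<le> s" "s \<le> 1" unfolding s_def using v0 powr_mono'[of 0 "40/7" v] by auto
  have "s^7 = v^40"
  proof -
    have sp: "0 < s" unfolding s_def using v0 by simp
    have "s^7 = s powr (real 7)" by (rule powr_realpow[OF sp, symmetric])
    also have "\<dots> = v powr (40/7 * real 7)" unfolding s_def powr_powr ..
    also have "40/7 * real 7 = real 40" by simp
    also have "v powr real 40 = v^40" by (rule powr_realpow[OF v0(1)])
    finally show ?thesis .
  qed
  also have "v^40 \<le> Psi_hat x1 ^ 40" using vle v0 by (intro power_mono) auto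
  finally have "s^7 \<le> U^7" using assms by linarith
  hence "s^Suc 6 \<le> U^Suc 6" by (simp add: numeral_eq_Suc)
  hence sU: "s \<le> U" using assms(6) by (rule power_le_imp_le_base)
  have sU1: "s*U \<le> 1" using sU s0 assms mult_le_one[of s U] by auto
  have "U*(2-s)^2 - s*(2-U)^2 = (U-s)*(4-s*U)" by (simp add: algebra_simps power2_eq_square)
  also have "(U-s)*(4-s*U) \<ge> 0" using sU sU1 by (intro mult_nonneg_nonneg) auto
  finally have "s*(2-U)^2 \<le> U*(2-s)^2" by simp
  hence f1: "s/(2-s)^2 \<le> U/(2-U)^2" using s0 assms
    by (subst frac_le_eq) (auto simp: power2_eq_square intro!: divide_nonpos_pos mult_pos_pos)
  have x2: "x^2 \<le> x2^2" "x2^2 \<le> 1/4"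
    using assms power_mono[of x2 "1/2" 2] power_mono[of x x2 2] by (auto simp: power2_eq_square)
  have pos: "0 < (1-x2^2)*(1-2*x2^2)" using x2 by (intro mult_pos_pos) auto
  have "(1-x2^2)*(1-2*x2^2) \<le> (1-x^2)*(1-2*x^2)" using x2 by (intro mult_mono) auto
  hence f2: "2*x/((1-x^2)*(1-2*x^2)) \<le> 2*x2/((1-x2^2)*(1-2*x2^2))"
    using assms pos by (intro frac_le) auto
  have "(40/7) * s / (2 - s)^2 * (2*x/((1-x^2)*(1-2*x^2))) \<le> (40/7) * U/(2-U)^2 * (2*x2/((1-x2^2)*(1-2*x2^2)))"
  proof -
    have a: "(40/7) * s / (2 - s)^2 \<le> (40/7) * U/(2-U)^2" using mult_left_mono[OF f1, of "40/7"] by simp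
    have xx: "2*x^2 \<le> 1" "x^2 \<le> 1" using x2 by auto
    have "0 \<le> 2*x/((1-x^2)*(1-2*x^2))" using xx assms by (intro divide_nonneg_nonneg mult_nonneg_nonneg) auto
    moreover have "0 \<le> (40/7) * U/(2-U)^2" using assms by simp
    ultimately show ?thesis using a f2 by (intro mult_mono) auto
  qed
  thus ?thesis using assms unfolding s_def v_def by linarith
qed


lemma piece_all:
  fixes x :: real assumes "3/8 \<le> x" "x \<le> 1/2"
  shows "(40/7) * (Psi_hat x powr (40/7)) / (2 - Psi_hat x powr (40/7))^2 * (2*x/((1-x^2)*(1-2*x^2))) < 1"
proof -
  consider "x \<le> 386/1000" | "386/1000 \<le> x" "x \<le> 406/1000" | "406/1000 \<le> x" "x \<le> 441/1000"
    | "441/1000 \<le> x" by linarith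
  thus ?thesis
  proof cases
    case 1 show ?thesis
      by (rule piece[of "3/8" x "386/1000" "361/1000"]) (use assms 1 in \<open>simp_all add: Psi_hat_def power_divide\<close>)
  next
    case 2 show ?thesis
      by (rule piece[of "386/1000" x "406/1000" "333/1000"]) (use assms 2 in \<open>simp_all add: Psi_hat_def power_divide\<close>)
  next
    case 3 show ?thesis
      by (rule piece[of "406/1000" x "441/1000" "285/1000"]) (use assms 3 in \<open>simp_all add: Psi_hat_def power_divide\<close>)
  next
    case 4 show ?thesis
      by (rule piece[of "441/1000" x "1/2" "207/1000"]) (use assms 4 in \<open>simp_all add: Psi_hat_def power_divide\<close>)
  qed
qed

theorem lemma4p3:
  fixes d x :: real
  assumes "6.74 \<le> d" "d \<le> 7.5"
      and "3/8 \<le> x" "x \<le> 1/2"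
  shows "\<exists>D. (Psi d has_real_derivative D) (at x) \<and> \<bar>D\<bar> < 1"
proof -
  define v where "v = Psi_hat x"
  define w where "w = v powr (d-1)"
  define q :: real where "q = 40/7"
  define s where "s = v powr q"
  define H where "H = 2*x/((1-x^2)*(1-2*x^2))"
  have x0: "0 < x" using assms by simp
  have xsq: "x^2 \<le> 1/4" using assms power_mono[of x "1/2" 2] by (auto simp: power2_eq_square)
  have xsq0: "0 < x^2" using x0 by simp
  have v0: "0 < v" "v < 1" using hat_bounds[of x] x0 assms unfolding v_def by auto
  have w0: "0 < w" "w \<le> 1" unfolding w_def using v0 powr_mono'[of 0 "d-1" v] assms by auto
  define D where "D = (- ((d-1) * v powr (d-1-1)) / (2 - v powr (d-1))^2) * (-2*x/(1-x^2)^2)"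
  have deriv: "(Psi d has_real_derivative D) (at x)"
    unfolding Psi_def D_def v_def
    by (rule DERIV_chain[OF dot_deriv hat_deriv]) (use v0 w0 xsq in \<open>auto simp: v_def w_def\<close>)
  have pd: "v powr (d-1-1) = w / v" unfolding w_def using v0 powr_diff[of v "d-1" 1] by simp
  have vx: "v * (1-x^2) = 1 - 2*x^2" unfolding v_def Psi_hat_def using xsq by (simp add: field_simps)
  have DH: "D = (d-1) * w / (2-w)^2 * H"
  proof -
    have "D = (d-1) * w / (2-w)^2 * (2*x/((v * (1-x^2)) * (1-x^2)))"
      unfolding D_def pd w_def[symmetric] using v0 xsq
      by (simp add: field_simps power2_eq_square)
    also have "\<dots> = (d-1) * w / (2-w)^2 * H" unfolding vx H_def by (simp add: mult.commute)
    finally show ?thesis .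
  qed
  have H0: "0 \<le> H" unfolding H_def using x0 xsq by (intro divide_nonneg_nonneg mult_nonneg_nonneg) auto
  have D0: "0 \<le> D" unfolding DH using w0 H0 assms by simp
  have lnv: "ln v \<le> -1/q"
  proof -
    have "v \<le> Psi_hat (3/8)" unfolding v_def using hat_mono[of "3/8" x] assms by simp
    also have "Psi_hat (3/8) = 46/55" by (simp add: Psi_hat_def power_divide)
    finally have "ln v \<le> ln (46/55)" using v0 by simp
    also have "ln (46/55::real) = - ln (55/46)" by (simp add: ln_div)
    also have "7/40 \<le> ln (55/46::real)" using exp_small by (subst ln_ge_iff) auto
    hence "- ln (55/46::real) \<le> -1/q" unfolding q_def by simp
    finally show ?thesis .
  qed
  have k: "(d-1) * w \<le> q * s" unfolding w_def s_def
    by (rule key_mono) (use v0 lnv assms in \<open>auto simp: q_def\<close>)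
  have ws: "w \<le> s" unfolding w_def s_def using v0 assms by (intro powr_mono') (auto simp: q_def)
  have s1: "s \<le> 1" unfolding s_def using v0 powr_mono'[of 0 q v] by (auto simp: q_def)
  have "(2-s)^2 \<le> (2-w)^2" using ws s1 w0 by (intro power_mono) auto
  hence "(d-1) * w / (2-w)^2 \<le> q * s / (2-s)^2"
    using k w0 s1 assms ws by (intro frac_le) (auto simp: q_def)
  hence "D \<le> q * s / (2-s)^2 * H" unfolding DH using H0 by (intro mult_right_mono)
  also have "\<dots> < 1" using piece_all[OF assms(3,4)] unfolding q_def s_def v_def H_def by simp
  finally show ?thesis using deriv D0 by auto
qed

end
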